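(* Let $\widehat D=(Q,\widehat\Sigma,q_0,\delta,F)$ be as in the context and let $\mathcal A=(Q,\Sigma,q_0,\delta_0,\delta_1,F)$ be defined as follows: for $q\in Q$, $\sigma\in\Sigma$, $c\in\{0,1\}$, if $\delta(q,\sigma^c)=q'$ is defined, then $\delta_c(q,\sigma)=(q',\mathit{act}|_\sigma)$, where $\mathit{act}\in\Sigma_{\mathsf{Act}}$ is any letter with $\mathit{act}[0]=c$, $\delta(q,\mathit{act})$ defined and $\mathit{act}|_\sigma\neq\bot$; otherwise $\delta_c(q,\sigma)$ is undefined. Then such an $\mathit{act}$ always exists, the value $\mathit{act}|_\sigma$ does not depend on the choice of $\mathit{act}$ (so $\delta_0,\delta_1$ are well defined, with $\delta_0$ using only counter updates in $\{0,+1\}$), and $\mathcal A$ is a (partial) deterministic real-time one-counter automaton consistent with the sample: for every $w\in\mathrm{pref}(\mathcal S)$ the run of $\mathcal A$ on $w$ exists and its counter-effect equals $\mathsf{ce}(w)$, every word of $\mathcal S^+$ is accepted by $\mathcal A$, and every word of $\mathcal S^-$ is rejected by $\mathcal A$.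
   Context: Let $\Sigma=\{\sigma_1,\dots,\sigma_k\}$ be a finite alphabet. A sample set is a pair of finite sets of words $\mathcal S^+,\mathcal S^-\subseteq\Sigma^*$ with $\mathcal S^+\cap\mathcal S^-=\emptyset$; write $\mathcal S=\mathcal S^+\cup\mathcal S^-$ and $\mathrm{pref}(\mathcal S)$ for the set of all prefixes (including $\varepsilon$ and the words themselves) of words of $\mathcal S$. We are given $\mathsf{ce}:\mathrm{pref}(\mathcal S)\to\mathbb N$ with $\mathsf{ce}(\varepsilon)=0$ and $\mathsf{ce}(w\sigma)-\mathsf{ce}(w)\in\{-1,0,+1\}$ whenever $w\sigma\in\mathrm{pref}(\mathcal S)$, $\sigma\in\Sigma$. For $d\in\mathbb N$, $\mathrm{sgn}(d)=0$ if $d=0$ and $1$ otherwise. For $w\in\mathrm{pref}(\mathcal S)$ define $\mathsf{Act}(w)\in\{0,1\}\times\{0,+1,-1,\bot\}^k$ by $\mathsf{Act}(w)[0]=\mathrm{sgn}(\mathsf{ce}(w))$ and, for $i\in[1,k]$, $\mathsf{Act}(w)[i]=\mathsf{ce}(w\sigma_i)-\mathsf{ce}(w)$ if $w\sigma_i\in\mathrm{pref}(\mathcal S)$, and $\mathsf{Act}(w)[i]=\bot$ otherwise. For a tuple $\mathit{act}$ of this shape, $\mathit{act}|_{\sigma_i}$ denotes $\mathit{act}[i]$. Two such tuples $x,y$ are similar, $x\sim y$, if either $x[0]\neq y[0]$, or for all $i\in[1,k]$: $x[i]=\bot$ or $y[i]=\bot$ or $x[i]=y[i]$; otherwise $x\not\sim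 y$. Let $\widetilde\Sigma=\{\sigma^0,\sigma^1:\sigma\in\Sigma\}$ (fresh letters). For $w\in\mathrm{pref}(\mathcal S)$, $\mathsf{Enc}(\varepsilon)=\varepsilon$ and $\mathsf{Enc}(w)$ is the word over $\widetilde\Sigma$ of the same length with $\mathsf{Enc}(w)[0]=w[0]^0$ and $\mathsf{Enc}(w)[i]=w[i]^{\mathrm{sgn}(\mathsf{ce}(w[0\cdots i-1]))}$ for $i>0$ (positions indexed from $0$). Let $\Sigma_{\mathsf{Act}}=\{\mathsf{Act}(w):w\in\mathrm{pref}(\mathcal S)\}$, viewed as a set of fresh letters, and $\widehat\Sigma=\widetilde\Sigma\cup\Sigma_{\mathsf{Act}}$. The enriched sample over $\widehat\Sigma$ is: $\widehat{\mathcal S}^+=\{\mathsf{Enc}(w):w\in\mathcal S^+\}\cup\{\mathsf{Enc}(w)\cdot\mathsf{Act}(w):w\in\mathrm{pref}(\mathcal S)\}$ and $\widehat{\mathcal S}^-=\{\mathsf{Enc}(w):w\in\mathcal S^-\}\cup\{\mathsf{Enc}(w)\cdot\mathit{op}:w\in\mathrm{pref}(\mathcal S),\ \mathit{op}\in\Sigma_{\mathsf{Act}},\ \mathit{op}\not\sim\mathsf{Act}(w)\}$. $\widehat D=(Q,\widehat\Sigma,q_0,\delta,F)$ is a deterministic finite automaton with possibly partial transition function $\delta$ (a word is accepted iff its run exists and ends in $F$) such that: (i) $\widehat D$ accepts every word of $\widehat{\mathcal S}^+$ and rejects every word of $\widehat{\mathcal S}^-$; (ii) every transition comes from a prefix of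 a positive sample: whenever $\delta(q,x)=q'$ with $x\in\widehat\Sigma$, there is a word $u$ with $ux\in\mathrm{pref}(\widehat{\mathcal S}^+)$ and $\delta(q_0,u)=q$. (These properties hold e.g. for the output of the RPNI algorithm.) A deterministic real-time one-counter automaton (DROCA) is $\mathcal A=(Q,\Sigma,q_0,\delta_0,\delta_1,F)$ with (here possibly partial) maps $\delta_0:Q\times\Sigma\to Q\times\{0,+1\}$ and $\delta_1:Q\times\Sigma\to Q\times\{0,+1,-1\}$. Configurations are pairs $(p,n)\in Q\times\mathbb N$; there is a step $(p,n)\xrightarrow{a}(q,n+e)$ iff $\delta_{\mathrm{sgn}(n)}(p,a)=(q,e)$. The run on $w$ starts at $(q_0,0)$; if it exists and ends in $(q,m)$, then $m$ is the counter-effect $\mathsf{ce}_{\mathcal A}(w)$ and $w$ is accepted iff $q\in F$; otherwise $w$ is rejected. *)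

theory Defs
  imports Main "HOL-Library.Sublist"
begin

definition sgnn :: "nat \<Rightarrow> nat" where
  "sgnn d = (if d = 0 then 0 else 1)"

definition pref :: "'x list set \<Rightarrow> 'x list set" where
  "pref S = {u. \<exists>w\<in>S. prefix u w}"

(* An Act-letter: component 0 is a nat in {0,1}; components 1..k are indexed by the
   letters of Sig, with None playing the role of bottom. *)
type_synonym 'a act = "nat \<times> ('a \<Rightarrow> int option)"

(* the enriched alphabet: Tl s c is the letter s^c, ActL a is an Act-letter *)
datatype 'a hat = Tl 'a nat | ActL "'a act"

definition Act :: "'a set \<Rightarrow> 'a list set \<Rightarrow> ('a list \<Rightarrow> nat) \<Rightarrow> 'a list \<Rightarrow> 'a act" where
  "Act Sig S ce w =
     (sgnn (ce w),
      (\<lambda>s. if s \<in> Sig \<and> w @ [s] \<in> pref S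
           then Some (int (ce (w @ [s])) - int (ce w)) else None))"

definition similar :: "'a set \<Rightarrow> 'a act \<Rightarrow> 'a act \<Rightarrow> bool" where
  "similar Sig x y \<longleftrightarrow>
     fst x \<noteq> fst y \<or>
     (\<forall>s\<in>Sig. snd x s = None \<or> snd y s = None \<or> snd x s = snd y s)"

definition Enc :: "('a list \<Rightarrow> nat) \<Rightarrow> 'a list \<Rightarrow> 'a hat list" where
  "Enc ce w = map (\<lambda>i. Tl (w ! i) (if i = 0 then 0 else sgnn (ce (take i w)))) [0..<length w]"

definition SigmaAct :: "'a set \<Rightarrow> 'a list set \<Rightarrow> ('a list \<Rightarrow> nat) \<Rightarrow> 'a act set" where
  "SigmaAct Sig S ce = Act Sig S ce ` pref S"

definition hatPos :: "'a set \<Rightarrow> 'a list set \<Rightarrow> 'a list set \<Rightarrow> ('a list \<Rightarrow> nat) \<Rightarrow> 'a hat list set" where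
  "hatPos Sig Sp Sn ce =
     Enc ce ` Sp \<union> {Enc ce w @ [ActL (Act Sig (Sp \<union> Sn) ce w)] | w. w \<in> pref (Sp \<union> Sn)}"

definition hatNeg :: "'a set \<Rightarrow> 'a list set \<Rightarrow> 'a list set \<Rightarrow> ('a list \<Rightarrow> nat) \<Rightarrow> 'a hat list set" where
  "hatNeg Sig Sp Sn ce =
     Enc ce ` Sn \<union> {Enc ce w @ [ActL op] | w op. w \<in> pref (Sp \<union> Sn)
        \<and> op \<in> SigmaAct Sig (Sp \<union> Sn) ce
        \<and> \<not> similar Sig op (Act Sig (Sp \<union> Sn) ce w)}"

definition dfa_run :: "('s \<Rightarrow> 'b \<Rightarrow> 's option) \<Rightarrow> 's \<Rightarrow> 'b list \<Rightarrow> 's option" where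
  "dfa_run \<delta> q w = fold (\<lambda>x r. Option.bind r (\<lambda>p. \<delta> p x)) w (Some q)"

definition dfa_accepts :: "('s \<Rightarrow> 'b \<Rightarrow> 's option) \<Rightarrow> 's \<Rightarrow> 's set \<Rightarrow> 'b list \<Rightarrow> bool" where
  "dfa_accepts \<delta> q0 F w \<longleftrightarrow> (\<exists>q. dfa_run \<delta> q0 w = Some q \<and> q \<in> F)"

definition droca_delta ::
  "('s \<Rightarrow> 'a hat \<Rightarrow> 's option) \<Rightarrow> 'a act set \<Rightarrow> nat \<Rightarrow> 's \<Rightarrow> 'a \<Rightarrow> ('s \<times> int) option" where
  "droca_delta \<delta> SAct c q s =
     (case \<delta> q (Tl s c) of
        None \<Rightarrow> None
      | Some q' \<Rightarrow> Some (q', the (snd (SOME a. a \<in> SAct \<and> fst a = c \<and> \<delta> q (ActL a) \<noteq> None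
                                                \<and> snd a s \<noteq> None) s)))"

definition droca_step :: "(nat \<Rightarrow> 's \<Rightarrow> 'a \<Rightarrow> ('s \<times> int) option) \<Rightarrow> ('s \<times> nat) \<Rightarrow> 'a \<Rightarrow> ('s \<times> nat) option" where
  "droca_step d cfg a =
     (case cfg of (p, n) \<Rightarrow>
       (case d (sgnn n) p a of
          None \<Rightarrow> None
        | Some (q, e) \<Rightarrow> if int n + e \<ge> 0 then Some (q, nat (int n + e)) else None))"

definition droca_run :: "(nat \<Rightarrow> 's \<Rightarrow> 'a \<Rightarrow> ('s \<times> int) option) \<Rightarrow> 's \<Rightarrow> 'a list \<Rightarrow> ('s \<times> nat) option" where
  "droca_run d q0 w = fold (\<lambda>a r. Option.bind r (\<lambda>cfg. droca_step d cfg a)) w (Some (q0, 0))"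

definition droca_accepts :: "(nat \<Rightarrow> 's \<Rightarrow> 'a \<Rightarrow> ('s \<times> int) option) \<Rightarrow> 's \<Rightarrow> 's set \<Rightarrow> 'a list \<Rightarrow> bool" where
  "droca_accepts d q0 F w \<longleftrightarrow> (\<exists>q m. droca_run d q0 w = Some (q, m) \<and> q \<in> F)"

end

theory Submission
  imports Defs
begin

lemma fold_bind_None: "fold (\<lambda>x r. Option.bind r (\<lambda>p. \<delta> p x)) w None = None"
  by (induct w) auto

lemma dfa_run_snoc: "dfa_run \<delta> q (u @ [x]) = Option.bind (dfa_run \<delta> q u) (\<lambda>p. \<delta> p x)"
  by (simp add: dfa_run_def)

lemma droca_run_snoc: "droca_run d q0 (w @ [a]) = Option.bind (droca_run d q0 w) (\<lambda>cfg. droca_step d cfg a)"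
  by (simp add: droca_run_def)

lemma length_Enc[simp]: "length (Enc ce w) = length w"
  by (simp add: Enc_def)

lemma nth_Enc: "i < length w \<Longrightarrow> Enc ce w ! i = Tl (w!i) (if i=0 then 0 else sgnn (ce (take i w)))"
  by (simp add: Enc_def)

lemma take_Enc: "take n (Enc ce w) = Enc ce (take n w)"
proof (rule nth_equalityI)
  show "length (take n (Enc ce w)) = length (Enc ce (take n w))" by simp
next
  fix i assume "i < length (take n (Enc ce w))"
  hence i: "i < n" "i < length w" by auto
  thus "take n (Enc ce w) ! i = Enc ce (take n w) ! i" by (simp add: nth_Enc)
qed

lemma Enc_snoc: "ce [] = 0 \<Longrightarrow> Enc ce (w@[s]) = Enc ce w @ [Tl s (sgnn (ce w))]"
  by (rule nth_equalityI) (auto simp: nth_Enc nth_append sgnn_def less_Suc_eq)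

lemma Enc_Tl: "x \<in> set (Enc ce w) \<Longrightarrow> \<exists>s c. x = Tl s c"
  by (auto simp: Enc_def)

lemma prefix_Enc: "prefix (u@[x]) (Enc ce w) \<Longrightarrow> \<exists>n<length w. u = Enc ce (take n w) \<and> x = Enc ce w ! n"
proof -
  assume "prefix (u@[x]) (Enc ce w)"
  then obtain zs where e: "Enc ce w = u @ [x] @ zs" by (auto simp: prefix_def)
  have "length u < length w" using arg_cong[OF e, of length] by simp
  moreover have "u = take (length u) (Enc ce w)" using e by simp
  moreover have "x = Enc ce w ! length u" using e by simp
  ultimately show ?thesis by (metis take_Enc)
qed

lemma pref_prefix: "v \<in> pref S \<Longrightarrow> prefix u v \<Longrightarrow> u \<in> pref S"
  by (auto simp: pref_def intro: prefix_order.trans)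

lemma in_pref: "w \<in> S \<Longrightarrow> w \<in> pref S"
  by (auto simp: pref_def)

lemma char_Tl:
  assumes ce0: "ce [] = 0" and h: "u @ [Tl s c] \<in> pref (hatPos Sig Sp Sn ce)"
  shows "\<exists>v. u = Enc ce v \<and> v @ [s] \<in> pref (Sp \<union> Sn) \<and> c = sgnn (ce v)"
proof -
  have "\<exists>w\<in>pref (Sp \<union> Sn). prefix (u @ [Tl s c]) (Enc ce w)"
  proof -
    from h obtain w' where w': "w' \<in> hatPos Sig Sp Sn ce" "prefix (u @ [Tl s c]) w'"
      by (auto simp: pref_def)
    show ?thesis
    proof (cases "w' \<in> Enc ce ` Sp")
      case True then show ?thesis using w' by (auto intro: in_pref)
    next
      case False
      then obtain w where "w \<in> pref (Sp \<union> Sn)" "w' = Enc ce w @ [ActL (Act Sig (Sp \<union> Sn) ce w)]"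
        using w'(1) unfolding hatPos_def by blast
      then show ?thesis using w' by (auto simp: prefix_snoc)
    qed
  qed
  then obtain w where w: "w \<in> pref (Sp \<union> Sn)" "prefix (u @ [Tl s c]) (Enc ce w)" by blast
  from prefix_Enc[OF w(2)] obtain n where n: "n < length w" "u = Enc ce (take n w)"
     "Tl s c = Enc ce w ! n" by blast
  have s: "s = w ! n" and c: "c = (if n=0 then 0 else sgnn (ce (take n w)))"
    using n by (auto simp: nth_Enc)
  have "take n w @ [s] = take (Suc n) w" using n s by (simp add: take_Suc_conv_app_nth)
  hence "take n w @ [s] \<in> pref (Sp \<union> Sn)" using w(1) by (metis pref_prefix take_is_prefix)
  moreover have "c = sgnn (ce (take n w))" using c ce0 by (auto simp: sgnn_def)
  ultimately show ?thesis using n by blast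
qed

lemma char_Act:
  assumes h: "u @ [ActL a] \<in> pref (hatPos Sig Sp Sn ce)"
  shows "\<exists>v\<in>pref (Sp \<union> Sn). u = Enc ce v \<and> a = Act Sig (Sp \<union> Sn) ce v"
proof -
  from h obtain w' where w': "w' \<in> hatPos Sig Sp Sn ce" "prefix (u @ [ActL a]) w'"
    by (auto simp: pref_def)
  have noT: "\<not> prefix (u @ [ActL a]) (Enc ce w)" for w
  proof
    assume "prefix (u @ [ActL a]) (Enc ce w)"
    hence "ActL a \<in> set (Enc ce w)" using set_mono_prefix by fastforce
    thus False using Enc_Tl by fastforce
  qed
  show ?thesis
  proof (cases "w' \<in> Enc ce ` Sp")
    case True then show ?thesis using w' noT by auto
  next
    case False
    then obtain w where "w \<in> pref (Sp \<union> Sn)" "w' = Enc ce w @ [ActL (Act Sig (Sp \<union> Sn) ce w)]"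
      using w'(1) unfolding hatPos_def by blast
    moreover have "u @ [ActL a] = Enc ce w @ [ActL (Act Sig (Sp \<union> Sn) ce w)]"
      using calculation w' noT by (auto simp: prefix_snoc)
    ultimately show ?thesis by auto
  qed
qed

theorem lemma3:
  fixes Sig :: "'a set" and Sp Sn :: "'a list set" and ce :: "'a list \<Rightarrow> nat"
    and Q :: "'s set" and q0 :: 's and \<delta> :: "'s \<Rightarrow> 'a hat \<Rightarrow> 's option" and F :: "'s set"
  defines "S \<equiv> Sp \<union> Sn"
  defines "SAct \<equiv> SigmaAct Sig S ce"
  assumes Sigma_fin: "finite Sig"
    and S_fin: "finite Sp" "finite Sn"
    and S_words: "\<forall>w\<in>S. set w \<subseteq> Sig"
    and S_disj: "Sp \<inter> Sn = {}"
    and ce_eps: "ce [] = 0"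
    and ce_step: "\<forall>w s. s \<in> Sig \<and> w @ [s] \<in> pref S \<longrightarrow>
                     int (ce (w @ [s])) - int (ce w) \<in> {-1, 0, 1}"
    and Q_fin: "finite Q" and q0_Q: "q0 \<in> Q" and F_Q: "F \<subseteq> Q"
    and \<delta>_Q: "\<forall>q x q'. \<delta> q x = Some q' \<longrightarrow> q \<in> Q \<and> q' \<in> Q"
    and cons_pos: "\<forall>u\<in>hatPos Sig Sp Sn ce. dfa_accepts \<delta> q0 F u"
    and cons_neg: "\<forall>u\<in>hatNeg Sig Sp Sn ce. \<not> dfa_accepts \<delta> q0 F u"
    and from_pos: "\<forall>q x q'. \<delta> q x = Some q' \<longrightarrow>
                     (\<exists>u. u @ [x] \<in> pref (hatPos Sig Sp Sn ce) \<and> dfa_run \<delta> q0 u = Some q)"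
  shows
    "(\<forall>q s c q'. s \<in> Sig \<and> c \<in> {0, 1} \<and> \<delta> q (Tl s c) = Some q' \<longrightarrow>
        (\<exists>a\<in>SAct. fst a = c \<and> \<delta> q (ActL a) \<noteq> None \<and> snd a s \<noteq> None))
   \<and> (\<forall>q s c q' a b. s \<in> Sig \<and> c \<in> {0, 1} \<and> \<delta> q (Tl s c) = Some q'
        \<and> a \<in> SAct \<and> fst a = c \<and> \<delta> q (ActL a) \<noteq> None \<and> snd a s \<noteq> None
        \<and> b \<in> SAct \<and> fst b = c \<and> \<delta> q (ActL b) \<noteq> None \<and> snd b s \<noteq> None
        \<longrightarrow> snd a s = snd b s)
   \<and> (\<forall>q s q' e. s \<in> Sig \<and> droca_delta \<delta> SAct 0 q s = Some (q', e) \<longrightarrow> e \<in> {0, 1})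
   \<and> (\<forall>q s q' e. s \<in> Sig \<and> droca_delta \<delta> SAct 1 q s = Some (q', e) \<longrightarrow> e \<in> {-1, 0, 1})
   \<and> (\<forall>w\<in>pref S. \<exists>q. droca_run (droca_delta \<delta> SAct) q0 w = Some (q, ce w))
   \<and> (\<forall>w\<in>Sp. droca_accepts (droca_delta \<delta> SAct) q0 F w)
   \<and> (\<forall>w\<in>Sn. \<not> droca_accepts (droca_delta \<delta> SAct) q0 F w)"
proof -
  have SAct_eq: "SAct = Act Sig S ce ` pref S" by (simp add: SAct_def SigmaAct_def)
  have hP: "hatPos Sig Sp Sn ce = Enc ce ` Sp \<union> {Enc ce w @ [ActL (Act Sig S ce w)] | w. w \<in> pref S}"
    by (simp add: hatPos_def S_def)
  have hN: "hatNeg Sig Sp Sn ce = Enc ce ` Sn \<union> {Enc ce w @ [ActL op] | w op. w \<in> pref S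
        \<and> op \<in> SAct \<and> \<not> similar Sig op (Act Sig S ce w)}"
    by (simp add: hatNeg_def S_def SAct_def)
  have key: "\<exists>v. dfa_run \<delta> q0 (Enc ce v) = Some q \<and> v@[s] \<in> pref S \<and> c = sgnn (ce v)"
    if hh: "\<delta> q (Tl s c) = Some q'" for q s c q'
  proof -
    obtain u where u: "u @ [Tl s c] \<in> pref (hatPos Sig Sp Sn ce)" "dfa_run \<delta> q0 u = Some q"
      using from_pos hh by blast
    from char_Tl[OF ce_eps u(1)] u(2) show ?thesis unfolding S_def by blast
  qed
  have actv: "\<exists>q2. \<delta> q (ActL (Act Sig S ce v)) = Some q2"
    if "dfa_run \<delta> q0 (Enc ce v) = Some q" "v \<in> pref S" for q v
  proof -
    have "Enc ce v @ [ActL (Act Sig S ce v)] \<in> hatPos Sig Sp Sn ce" unfolding hP using that(2) by blast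
    hence "dfa_accepts \<delta> q0 F (Enc ce v @ [ActL (Act Sig S ce v)])" using cons_pos by blast
    thus ?thesis using that(1) by (auto simp: dfa_accepts_def dfa_run_snoc)
  qed
  have actF: "q2 \<in> F" if hh: "\<delta> q (ActL a) = Some q2" for q a q2
  proof -
    obtain u where u: "u @ [ActL a] \<in> pref (hatPos Sig Sp Sn ce)" "dfa_run \<delta> q0 u = Some q"
      using from_pos hh by blast
    from char_Act[OF u(1)] obtain v where v: "v \<in> pref S" "u = Enc ce v" "a = Act Sig S ce v"
      unfolding S_def by blast
    have "Enc ce v @ [ActL a] \<in> hatPos Sig Sp Sn ce" unfolding hP using v by blast
    hence "dfa_accepts \<delta> q0 F (Enc ce v @ [ActL a])" using cons_pos by blast
    thus ?thesis using hh u(2) v(2) by (auto simp: dfa_accepts_def dfa_run_snoc)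
  qed
  have uniq: "snd a s = Some (int (ce (v@[s])) - int (ce v))"
    if h: "dfa_run \<delta> q0 (Enc ce v) = Some q" "v@[s] \<in> pref S" "s \<in> Sig" "a \<in> SAct"
       "fst a = sgnn (ce v)" "\<delta> q (ActL a) \<noteq> None" "snd a s \<noteq> None" for q v s a
  proof (rule ccontr)
    assume ne: "snd a s \<noteq> Some (int (ce (v@[s])) - int (ce v))"
    have vS: "v \<in> pref S" using h(2) pref_prefix by (metis prefix_order.eq_iff prefix_snoc)
    have A: "snd (Act Sig S ce v) s = Some (int (ce (v@[s])) - int (ce v))"
      using h(2,3) by (simp add: Act_def)
    have "\<not> similar Sig a (Act Sig S ce v)"
      using h(2,3,5,7) ne A by (auto simp: similar_def Act_def)
    hence "Enc ce v @ [ActL a] \<in> hatNeg Sig Sp Sn ce" unfolding hN using vS h(4) by blast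
    hence na: "\<not> dfa_accepts \<delta> q0 F (Enc ce v @ [ActL a])" using cons_neg by blast
    obtain q2 where q2: "\<delta> q (ActL a) = Some q2" using h(6) by blast
    have "q2 \<in> F" using actF[OF q2] .
    thus False using na h(1) q2 by (auto simp: dfa_accepts_def dfa_run_snoc)
  qed
  have dd: "droca_delta \<delta> SAct c q s = Some (q', int (ce (v@[s])) - int (ce v))"
    if h: "s \<in> Sig" "\<delta> q (Tl s c) = Some q'" "dfa_run \<delta> q0 (Enc ce v) = Some q"
      "v@[s] \<in> pref S" "c = sgnn (ce v)" for q s c q' v
  proof -
    define P where "P = (\<lambda>a. a \<in> SAct \<and> fst a = c \<and> \<delta> q (ActL a) \<noteq> None \<and> snd a s \<noteq> None)"
    have vS: "v \<in> pref S" using h(4) pref_prefix by (metis prefix_order.eq_iff prefix_snoc)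
    have "P (Act Sig S ce v)" unfolding P_def SAct_eq using vS h actv[OF h(3) vS]
      by (auto simp: Act_def)
    hence "P (SOME a. P a)" by (rule someI)
    hence "snd (SOME a. P a) s = Some (int (ce (v@[s])) - int (ce v))"
      using uniq[OF h(3) h(4) h(1)] h(5) unfolding P_def by blast
    thus ?thesis using h(2) unfolding droca_delta_def P_def by simp
  qed
  have P1: "\<forall>q s c q'. s \<in> Sig \<and> c \<in> {0, 1} \<and> \<delta> q (Tl s c) = Some q' \<longrightarrow>
        (\<exists>a\<in>SAct. fst a = c \<and> \<delta> q (ActL a) \<noteq> None \<and> snd a s \<noteq> None)"
  proof (intro allI impI)
    fix q s c q' assume h: "s \<in> Sig \<and> c \<in> {0, 1} \<and> \<delta> q (Tl s c) = Some q'"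
    then obtain v where v: "dfa_run \<delta> q0 (Enc ce v) = Some q" "v@[s] \<in> pref S" "c = sgnn (ce v)"
      using key by blast
    have vS: "v \<in> pref S" using v(2) pref_prefix by (metis prefix_order.eq_iff prefix_snoc)
    show "\<exists>a\<in>SAct. fst a = c \<and> \<delta> q (ActL a) \<noteq> None \<and> snd a s \<noteq> None"
      using vS v h actv[OF v(1) vS] unfolding SAct_eq by (auto simp: Act_def intro!: bexI[of _ v])
  qed
  have P2: "\<forall>q s c q' a b. s \<in> Sig \<and> c \<in> {0, 1} \<and> \<delta> q (Tl s c) = Some q'
        \<and> a \<in> SAct \<and> fst a = c \<and> \<delta> q (ActL a) \<noteq> None \<and> snd a s \<noteq> None
        \<and> b \<in> SAct \<and> fst b = c \<and> \<delta> q (ActL b) \<noteq> None \<and> snd b s \<noteq> None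
        \<longrightarrow> snd a s = snd b s"
  proof (intro allI impI)
    fix q s c q' a b assume h: "s \<in> Sig \<and> c \<in> {0, 1} \<and> \<delta> q (Tl s c) = Some q'
        \<and> a \<in> SAct \<and> fst a = c \<and> \<delta> q (ActL a) \<noteq> None \<and> snd a s \<noteq> None
        \<and> b \<in> SAct \<and> fst b = c \<and> \<delta> q (ActL b) \<noteq> None \<and> snd b s \<noteq> None"
    then obtain v where v: "dfa_run \<delta> q0 (Enc ce v) = Some q" "v@[s] \<in> pref S" "c = sgnn (ce v)"
      using key by blast
    show "snd a s = snd b s" using uniq[OF v(1,2)] h v(3) by metis
  qed
  have P34: "e \<in> {-1, 0, 1} \<and> (c = 0 \<longrightarrow> e \<in> {0, 1})"
    if h: "s \<in> Sig" "droca_delta \<delta> SAct c q s = Some (q', e)" for c q s q' e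
  proof -
    obtain q'' where q'': "\<delta> q (Tl s c) = Some q''"
      using h(2) unfolding droca_delta_def by (auto split: option.splits)
    then obtain v where v: "dfa_run \<delta> q0 (Enc ce v) = Some q" "v@[s] \<in> pref S" "c = sgnn (ce v)"
      using key by blast
    have "e = int (ce (v@[s])) - int (ce v)" using dd[OF h(1) q'' v] h(2) by simp
    moreover have "int (ce (v@[s])) - int (ce v) \<in> {-1, 0, 1}" using ce_step h(1) v(2) by blast
    moreover have "c = 0 \<longrightarrow> ce v = 0" using v(3) by (simp add: sgnn_def split: if_splits)
    ultimately show ?thesis by auto
  qed
  have run: "w \<in> pref S \<longrightarrow> (\<exists>q. dfa_run \<delta> q0 (Enc ce w) = Some q \<and>
              droca_run (droca_delta \<delta> SAct) q0 w = Some (q, ce w))" for w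
  proof (induction w rule: rev_induct)
    case Nil
    show ?case by (simp add: dfa_run_def droca_run_def Enc_def ce_eps)
  next
    case (snoc s w)
    show ?case
    proof
      assume ws: "w @ [s] \<in> pref S"
      have wS: "w \<in> pref S" using ws pref_prefix by (metis prefix_order.eq_iff prefix_snoc)
      then obtain q where q: "dfa_run \<delta> q0 (Enc ce w) = Some q"
        "droca_run (droca_delta \<delta> SAct) q0 w = Some (q, ce w)" using snoc by blast
      have sSig: "s \<in> Sig"
      proof -
        obtain w' where "w' \<in> S" "prefix (w@[s]) w'" using ws by (auto simp: pref_def)
        hence "s \<in> set w'" using set_mono_prefix by fastforce
        thus ?thesis using S_words \<open>w' \<in> S\<close> by blast
      qed
      have "Enc ce (w@[s]) @ [ActL (Act Sig S ce (w@[s]))] \<in> hatPos Sig Sp Sn ce"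
        unfolding hP using ws by blast
      hence "dfa_accepts \<delta> q0 F (Enc ce (w@[s]) @ [ActL (Act Sig S ce (w@[s]))])" using cons_pos by blast
      hence "dfa_run \<delta> q0 (Enc ce (w@[s])) \<noteq> None"
        unfolding dfa_accepts_def dfa_run_snoc by (cases "dfa_run \<delta> q0 (Enc ce (w@[s]))") auto
      hence "\<delta> q (Tl s (sgnn (ce w))) \<noteq> None"
        using q(1) by (simp add: Enc_snoc[of ce, OF ce_eps] dfa_run_snoc)
      then obtain q' where q': "\<delta> q (Tl s (sgnn (ce w))) = Some q'" by blast
      have d: "droca_delta \<delta> SAct (sgnn (ce w)) q s = Some (q', int (ce (w@[s])) - int (ce w))"
        using dd[OF sSig q' q(1) ws] by simp
      have "dfa_run \<delta> q0 (Enc ce (w@[s])) = Some q'"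
        using q(1) q' by (simp add: Enc_snoc[of ce, OF ce_eps] dfa_run_snoc)
      moreover have "droca_run (droca_delta \<delta> SAct) q0 (w@[s]) = Some (q', ce (w@[s]))"
        using q(2) d by (simp add: droca_run_snoc droca_step_def)
      ultimately show "\<exists>q. dfa_run \<delta> q0 (Enc ce (w @ [s])) = Some q \<and>
              droca_run (droca_delta \<delta> SAct) q0 (w @ [s]) = Some (q, ce (w @ [s]))" by blast
    qed
  qed
  have P6: "\<forall>w\<in>Sp. droca_accepts (droca_delta \<delta> SAct) q0 F w"
  proof
    fix w assume w: "w \<in> Sp"
    hence "w \<in> pref S" by (auto simp: S_def intro: in_pref)
    then obtain q where q: "dfa_run \<delta> q0 (Enc ce w) = Some q"
      "droca_run (droca_delta \<delta> SAct) q0 w = Some (q, ce w)" using run by blast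
    have "Enc ce w \<in> hatPos Sig Sp Sn ce" unfolding hP using w by blast
    hence "dfa_accepts \<delta> q0 F (Enc ce w)" using cons_pos by blast
    thus "droca_accepts (droca_delta \<delta> SAct) q0 F w" using q by (auto simp: dfa_accepts_def droca_accepts_def)
  qed
  have P7: "\<forall>w\<in>Sn. \<not> droca_accepts (droca_delta \<delta> SAct) q0 F w"
  proof
    fix w assume w: "w \<in> Sn"
    hence "w \<in> pref S" by (auto simp: S_def intro: in_pref)
    then obtain q where q: "dfa_run \<delta> q0 (Enc ce w) = Some q"
      "droca_run (droca_delta \<delta> SAct) q0 w = Some (q, ce w)" using run by blast
    have "Enc ce w \<in> hatNeg Sig Sp Sn ce" unfolding hN using w by blast
    hence "\<not> dfa_accepts \<delta> q0 F (Enc ce w)" using cons_neg by blast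
    thus "\<not> droca_accepts (droca_delta \<delta> SAct) q0 F w" using q by (auto simp: dfa_accepts_def droca_accepts_def)
  qed
  have P3: "\<forall>q s q' e. s \<in> Sig \<and> droca_delta \<delta> SAct 0 q s = Some (q', e) \<longrightarrow> e \<in> {0, 1}"
    using P34 by blast
  have P4: "\<forall>q s q' e. s \<in> Sig \<and> droca_delta \<delta> SAct 1 q s = Some (q', e) \<longrightarrow> e \<in> {-1, 0, 1}"
    using P34 by blast
  have P5: "\<forall>w\<in>pref S. \<exists>q. droca_run (droca_delta \<delta> SAct) q0 w = Some (q, ce w)"
    using run by blast
  show ?thesis using P1 P2 P3 P4 P5 P6 P7 by (intro conjI)
qed

end
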